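(* Let $T>0$, $\lambda_1,\lambda_2>0$, $p_{12},p_{21}\in[0,1]$, $r_1,r_2,h_1,h_2\ge0$ and $c_1,c_2\in\mathbb{R}$. For nonnegative integers $Q_1,Q_2$ define $$\pi^{(1)}(Q_1,Q_2)=\frac1T\Big[(r_1-c_1)Q_1+(r_2-c_2)Q_2-(r_1+h_1)E_{Q_1,Q_2}[n_1(T)]-(r_2+h_2)E_{Q_1,Q_2}[n_2(T)]\Big],$$ where $E_{Q_1,Q_2}$ denotes expectation for the inventory CTMC started at $(Q_1,Q_2)$. Then $\pi^{(1)}$ is submodular, i.e. for all integers $Q_1,Q_2\ge0$, $$\pi^{(1)}(Q_1+1,Q_2+1)-\pi^{(1)}(Q_1+1,Q_2)-\pi^{(1)}(Q_1,Q_2+1)+\pi^{(1)}(Q_1,Q_2)\le 0.$$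
   Context: Two products; customers wanting product $i$ arrive as independent Poisson processes of rate $\lambda_i$; a customer who wants product $i$ and finds it out of stock while product $j\ne i$ is in stock buys one unit of $j$ with probability $p_{ij}$ (otherwise the sale is lost). The inventory CTMC $\{(n_1(t),n_2(t))\}$ started at $(Q_1,Q_2)$ (no replenishment) has state space $\{0,\dots,Q_1\}\times\{0,\dots,Q_2\}$ and transition rates: from $(i_1,i_2)$ with $i_1,i_2\ge1$, to $(i_1-1,i_2)$ at rate $\lambda_1$ and to $(i_1,i_2-1)$ at rate $\lambda_2$; from $(i_1,0)$ with $i_1\ge 1$, to $(i_1-1,0)$ at rate $s_1=\lambda_1+\lambda_2p_{21}$; from $(0,i_2)$ with $i_2\ge1$, to $(0,i_2-1)$ at rate $s_2=\lambda_2+\lambda_1p_{12}$; $(0,0)$ is absorbing. $r_i,c_i,h_i$ are the retail price, unit purchase cost, and end-of-period holding cost of product $i$. *)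

theory Defs
  imports Complex_Main
begin

definition inv_states :: "nat \<Rightarrow> nat \<Rightarrow> (nat \<times> nat) set" where
  "inv_states Q1 Q2 = {0..Q1} \<times> {0..Q2}"

definition inv_rate :: "real \<Rightarrow> real \<Rightarrow> real \<Rightarrow> real \<Rightarrow> nat \<times> nat \<Rightarrow> nat \<times> nat \<Rightarrow> real" where
  "inv_rate l1 l2 p12 p21 a b =
     (case a of (i1, i2) \<Rightarrow>
       if 1 \<le> i1 \<and> 1 \<le> i2 then
         (if b = (i1 - 1, i2) then l1 else if b = (i1, i2 - 1) then l2 else 0)
       else if 1 \<le> i1 \<and> i2 = 0 then
         (if b = (i1 - 1, 0) then l1 + l2 * p21 else 0)
       else if i1 = 0 \<and> 1 \<le> i2 then
         (if b = (0, i2 - 1) then l2 + l1 * p12 else 0)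
       else 0)"

definition inv_gen :: "(nat \<times> nat) set \<Rightarrow> real \<Rightarrow> real \<Rightarrow> real \<Rightarrow> real \<Rightarrow> nat \<times> nat \<Rightarrow> nat \<times> nat \<Rightarrow> real" where
  "inv_gen S l1 l2 p12 p21 a b =
     (if a = b then - (\<Sum>c\<in>S - {a}. inv_rate l1 l2 p12 p21 a c)
      else inv_rate l1 l2 p12 p21 a b)"

fun mat_pow :: "'s set \<Rightarrow> ('s \<Rightarrow> 's \<Rightarrow> real) \<Rightarrow> nat \<Rightarrow> 's \<Rightarrow> 's \<Rightarrow> real" where
  "mat_pow S G 0 a b = (if a = b then 1 else 0)"
| "mat_pow S G (Suc k) a b = (\<Sum>c\<in>S. mat_pow S G k a c * G c b)"

definition ctmc_trans :: "'s set \<Rightarrow> ('s \<Rightarrow> 's \<Rightarrow> real) \<Rightarrow> real \<Rightarrow> 's \<Rightarrow> 's \<Rightarrow> real" where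
  "ctmc_trans S G t a b = (\<Sum>k. t ^ k / fact k * mat_pow S G k a b)"

(* E_{Q1,Q2}[f(n1(T),n2(T))] for the inventory CTMC started at (Q1,Q2). *)
definition inv_expect ::
  "real \<Rightarrow> real \<Rightarrow> real \<Rightarrow> real \<Rightarrow> nat \<Rightarrow> nat \<Rightarrow> real \<Rightarrow> (nat \<times> nat \<Rightarrow> real) \<Rightarrow> real" where
  "inv_expect l1 l2 p12 p21 Q1 Q2 T f =
     (let S = inv_states Q1 Q2 in
      \<Sum>b\<in>S. ctmc_trans S (inv_gen S l1 l2 p12 p21) T (Q1, Q2) b * f b)"

definition pi1 ::
  "real \<Rightarrow> real \<Rightarrow> real \<Rightarrow> real \<Rightarrow> real \<Rightarrow> real \<Rightarrow> real \<Rightarrow> real \<Rightarrow> real \<Rightarrow> real \<Rightarrow> real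
   \<Rightarrow> nat \<Rightarrow> nat \<Rightarrow> real" where
  "pi1 T l1 l2 p12 p21 r1 r2 c1 c2 h1 h2 Q1 Q2 =
     (1 / T) * ((r1 - c1) * real Q1 + (r2 - c2) * real Q2
       - (r1 + h1) * inv_expect l1 l2 p12 p21 Q1 Q2 T (\<lambda>b. real (fst b))
       - (r2 + h2) * inv_expect l1 l2 p12 p21 Q1 Q2 T (\<lambda>b. real (snd b)))"

end

theory Submission imports Defs begin

definition Gop :: "real \<Rightarrow> real \<Rightarrow> real \<Rightarrow> real \<Rightarrow> (nat \<times> nat \<Rightarrow> real) \<Rightarrow> nat \<times> nat \<Rightarrow> real" where
"Gop a b s1 s2 f c = (case c of (i,j) \<Rightarrow>
   if 1 \<le> i \<and> 1 \<le> j then a*(f(i-1,j) - f(i,j)) + b*(f(i,j-1)-f(i,j))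
   else if 1 \<le> i then s1*(f(i-1,j) - f(i,j))
   else if 1 \<le> j then s2*(f(i,j-1)-f(i,j)) else 0)"

lemma gen_row:
  assumes c: "c \<in> inv_states Q1 Q2"
  shows "(\<Sum>b\<in>inv_states Q1 Q2. inv_gen (inv_states Q1 Q2) l1 l2 p12 p21 c b * f b)
    = Gop l1 l2 (l1+l2*p21) (l2+l1*p12) f c"
proof -
  let ?S = "inv_states Q1 Q2"
  let ?r = "inv_rate l1 l2 p12 p21 c"
  have fin: "finite ?S" by (simp add: inv_states_def)
  have "(\<Sum>b\<in>?S. inv_gen ?S l1 l2 p12 p21 c b * f b)
      = inv_gen ?S l1 l2 p12 p21 c c * f c + (\<Sum>b\<in>?S-{c}. inv_gen ?S l1 l2 p12 p21 c b * f b)"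
    using fin c by (simp add: sum.remove)
  also have "(\<Sum>b\<in>?S-{c}. inv_gen ?S l1 l2 p12 p21 c b * f b) = (\<Sum>b\<in>?S-{c}. ?r b * f b)"
    by (rule sum.cong) (auto simp: inv_gen_def)
  also have "inv_gen ?S l1 l2 p12 p21 c c * f c + (\<Sum>b\<in>?S-{c}. ?r b * f b) = (\<Sum>b\<in>?S-{c}. ?r b * (f b - f c))"
    by (simp add: inv_gen_def sum_distrib_right right_diff_distrib sum_subtractf)
  also have "\<dots> = Gop l1 l2 (l1+l2*p21) (l2+l1*p12) f c"
  proof -
    obtain i j where cij: "c = (i,j)" by force
    have ij: "i \<le> Q1" "j \<le> Q2" using c cij by (auto simp: inv_states_def)
    show ?thesis
    proof (cases "1 \<le> i \<and> 1 \<le> j")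
      case True
      have r: "?r b = (if b = (i-1,j) then l1 else 0) + (if b = (i,j-1) then l2 else 0)" for b
        using True by (auto simp: inv_rate_def cij)
      have m1: "(i-1,j) \<in> ?S - {c}" "(i,j-1) \<in> ?S - {c}" using True ij cij by (auto simp: inv_states_def)
      show ?thesis unfolding r using True fin m1
        by (simp add: distrib_right sum.distrib if_distrib[of "\<lambda>x. x * _"] cij Gop_def cong: if_cong)
    next
      case F: False
      show ?thesis
      proof (cases "1 \<le> i")
        case True
        hence j0: "j = 0" using F by auto
        have r: "?r b = (if b = (i-1,j) then l1 + l2*p21 else 0)" for b
          using True j0 by (auto simp: inv_rate_def cij)
        have m1: "(i-1,j) \<in> ?S - {c}" using True ij cij by (auto simp: inv_states_def)
        show ?thesis unfolding r using True fin m1 j0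
          by (simp add: if_distrib[of "\<lambda>x. x * _"] cij Gop_def cong: if_cong)
      next
        case i0: False
        show ?thesis
        proof (cases "1 \<le> j")
          case True
          have r: "?r b = (if b = (i,j-1) then l2 + l1*p12 else 0)" for b
            using True i0 by (auto simp: inv_rate_def cij)
          have m1: "(i,j-1) \<in> ?S - {c}" using True ij cij by (auto simp: inv_states_def)
          show ?thesis unfolding r using True fin m1 i0
            by (simp add: if_distrib[of "\<lambda>x. x * _"] cij Gop_def cong: if_cong)
        next
          case False
          have r: "?r b = 0" for b using False i0 by (auto simp: inv_rate_def cij)
          show ?thesis unfolding r using False i0 by (simp add: cij Gop_def)
        qed
      qed
    qed
  qed
  finally show ?thesis .
qed

lemma matpow_gop:
  assumes "a \<in> inv_states Q1 Q2"
  shows "(\<Sum>b\<in>inv_states Q1 Q2. mat_pow (inv_states Q1 Q2) (inv_gen (inv_states Q1 Q2) l1 l2 p12 p21) k a b * f b)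
    = (Gop l1 l2 (l1+l2*p21) (l2+l1*p12) ^^ k) f a"
  using assms
proof (induction k arbitrary: f)
  case 0
  have fin: "finite (inv_states Q1 Q2)" by (simp add: inv_states_def)
  then show ?case using 0 by (simp add: if_distrib[of "\<lambda>x. x * _"] cong: if_cong)
next
  case (Suc k)
  let ?S = "inv_states Q1 Q2"
  let ?G = "inv_gen ?S l1 l2 p12 p21"
  let ?Op = "Gop l1 l2 (l1+l2*p21) (l2+l1*p12)"
  have "(\<Sum>b\<in>?S. mat_pow ?S ?G (Suc k) a b * f b) = (\<Sum>b\<in>?S. \<Sum>c\<in>?S. mat_pow ?S ?G k a c * (?G c b * f b))"
    by (simp add: sum_distrib_right mult.assoc)
  also have "\<dots> = (\<Sum>c\<in>?S. mat_pow ?S ?G k a c * (\<Sum>b\<in>?S. ?G c b * f b))"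
    by (subst sum.swap) (simp add: sum_distrib_left)
  also have "\<dots> = (\<Sum>c\<in>?S. mat_pow ?S ?G k a c * ?Op f c)"
    by (rule sum.cong) (simp_all add: gen_row)
  also have "\<dots> = (?Op ^^ k) (?Op f) a" using Suc by simp
  also have "\<dots> = (?Op ^^ Suc k) f a" by (simp add: funpow_Suc_right del: funpow.simps)
  finally show ?case .
qed

lemma abs_aux: "\<bar>x\<bar> \<le> M \<Longrightarrow> \<bar>y\<bar> \<le> M \<Longrightarrow> (a::real) \<ge> 0 \<Longrightarrow> \<bar>a*(x-y)\<bar> \<le> 2*a*M"
proof -
  assume h: "\<bar>x\<bar> \<le> M" "\<bar>y\<bar> \<le> M" "a \<ge> 0"
  have "\<bar>x - y\<bar> \<le> 2*M" using h by linarith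
  hence "a * \<bar>x - y\<bar> \<le> a*(2*M)" using h by (intro mult_left_mono) auto
  thus ?thesis using h by (simp add: abs_mult)
qed

lemma gop_bound:
  assumes nn: "a \<ge> 0" "b \<ge> 0" "s1 \<ge> 0" "s2 \<ge> 0"
    and g: "\<forall>c\<in>inv_states Q1 Q2. \<bar>g c\<bar> \<le> M" and c: "c \<in> inv_states Q1 Q2"
  shows "\<bar>Gop a b s1 s2 g c\<bar> \<le> (2*(a+b+s1+s2)) * M"
proof -
  obtain i j where cij: "c = (i,j)" by force
  have ij: "i \<le> Q1" "j \<le> Q2" using c cij by (auto simp: inv_states_def)
  have M0: "M \<ge> 0" using g c by force
  have gc: "\<bar>g (i,j)\<bar> \<le> M" using g c cij by auto
  have g1: "\<bar>g (i-1,j)\<bar> \<le> M" using g ij by (auto simp: inv_states_def)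
  have g2: "\<bar>g (i,j-1)\<bar> \<le> M" using g ij by (auto simp: inv_states_def)
  have t1: "\<bar>a*(g(i-1,j) - g(i,j))\<bar> \<le> 2*a*M" using abs_aux[OF g1 gc nn(1)] .
  have t2: "\<bar>b*(g(i,j-1) - g(i,j))\<bar> \<le> 2*b*M" using abs_aux[OF g2 gc nn(2)] .
  have t3: "\<bar>s1*(g(i-1,j) - g(i,j))\<bar> \<le> 2*s1*M" using abs_aux[OF g1 gc nn(3)] .
  have t4: "\<bar>s2*(g(i,j-1) - g(i,j))\<bar> \<le> 2*s2*M" using abs_aux[OF g2 gc nn(4)] .
  have p: "0 \<le> a*M" "0 \<le> b*M" "0 \<le> s1*M" "0 \<le> s2*M" using nn M0 by auto
  have e: "(2*(a+b+s1+s2)) * M = 2*a*M + 2*b*M + 2*s1*M + 2*s2*M" by (simp add: algebra_simps)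
  show ?thesis unfolding e using t1 t2 t3 t4 p
    by (auto simp: Gop_def cij abs_triangle_ineq[THEN order_trans])
qed

lemma gop_pow_bound:
  assumes nn: "a \<ge> 0" "b \<ge> 0" "s1 \<ge> 0" "s2 \<ge> 0"
    and g: "\<forall>c\<in>inv_states Q1 Q2. \<bar>g c\<bar> \<le> M"
  shows "\<forall>c\<in>inv_states Q1 Q2. \<bar>(Gop a b s1 s2 ^^ k) g c\<bar> \<le> (2*(a+b+s1+s2))^k * M"
proof (induction k)
  case 0 then show ?case using g by simp
next
  case (Suc k)
  show ?case
  proof
    fix c assume c: "c \<in> inv_states Q1 Q2"
    have "\<bar>Gop a b s1 s2 ((Gop a b s1 s2 ^^ k) g) c\<bar> \<le> (2*(a+b+s1+s2)) * ((2*(a+b+s1+s2))^k * M)"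
      by (rule gop_bound[OF nn Suc c])
    thus "\<bar>(Gop a b s1 s2 ^^ Suc k) g c\<bar> \<le> (2*(a+b+s1+s2))^Suc k * M" by (simp add: mult.assoc)
  qed
qed

lemma expect_sums:
  assumes nn: "l1 \<ge> 0" "l2 \<ge> 0" "p12 \<ge> 0" "p21 \<ge> 0"
  shows "(\<lambda>k. T^k / fact k * (Gop l1 l2 (l1+l2*p21) (l2+l1*p12) ^^ k) f (Q1,Q2))
     sums inv_expect l1 l2 p12 p21 Q1 Q2 T f"
proof -
  let ?S = "inv_states Q1 Q2"
  let ?G = "inv_gen ?S l1 l2 p12 p21"
  let ?Op = "Gop l1 l2 (l1+l2*p21) (l2+l1*p12)"
  let ?K = "2*(l1+l2+(l1+l2*p21)+(l2+l1*p12))"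
  have a: "(Q1,Q2) \<in> ?S" by (simp add: inv_states_def)
  have fin: "finite ?S" by (simp add: inv_states_def)
  have nn2: "l1+l2*p21 \<ge> 0" "l2+l1*p12 \<ge> 0" using nn by auto
  have ent: "mat_pow ?S ?G k (Q1,Q2) b = (?Op ^^ k) (\<lambda>x. if x = b then 1 else 0) (Q1,Q2)"
    if b: "b \<in> ?S" for b k
  proof -
    have "(\<Sum>b'\<in>?S. mat_pow ?S ?G k (Q1,Q2) b' * (if b' = b then 1 else 0)) = mat_pow ?S ?G k (Q1,Q2) b"
      using fin b by (simp add: if_distrib[of "\<lambda>x. _ * x"] cong: if_cong)
    thus ?thesis using matpow_gop[OF a, of l1 l2 p12 p21 k "\<lambda>x. if x = b then 1 else 0"] by simp
  qed
  have summ: "summable (\<lambda>k. T^k / fact k * mat_pow ?S ?G k (Q1,Q2) b)" if b: "b \<in> ?S" for b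
  proof (rule summable_comparison_test)
    show "summable (\<lambda>k. inverse (fact k) * (\<bar>T\<bar> * ?K)^k)" by (rule summable_exp)
    have bd1: "\<forall>c\<in>?S. \<bar>(\<lambda>x. if x = b then 1 else 0::real) c\<bar> \<le> 1" by auto
    show "\<exists>N. \<forall>k\<ge>N. norm (T^k / fact k * mat_pow ?S ?G k (Q1,Q2) b) \<le> inverse (fact k) * (\<bar>T\<bar> * ?K)^k"
    proof (intro exI allI impI)
      fix k :: nat
      have B: "\<bar>mat_pow ?S ?G k (Q1,Q2) b\<bar> \<le> ?K^k"
        using gop_pow_bound[OF nn(1,2) nn2 bd1, of k] a ent[OF b, of k] by simp
      have "norm (T^k / fact k * mat_pow ?S ?G k (Q1,Q2) b) = inverse (fact k) * (\<bar>T\<bar>^k * \<bar>mat_pow ?S ?G k (Q1,Q2) b\<bar>)"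
        by (simp add: abs_mult power_abs divide_inverse)
      also have "\<dots> \<le> inverse (fact k) * (\<bar>T\<bar>^k * ?K^k)"
        by (intro mult_left_mono B) auto
      also have "\<dots> = inverse (fact k) * (\<bar>T\<bar> * ?K)^k" by (simp add: power_mult_distrib)
      finally show "norm (T^k / fact k * mat_pow ?S ?G k (Q1,Q2) b) \<le> inverse (fact k) * (\<bar>T\<bar> * ?K)^k" .
    qed
  qed
  have "(\<lambda>k. \<Sum>b\<in>?S. T^k / fact k * mat_pow ?S ?G k (Q1,Q2) b * f b) sums
        (\<Sum>b\<in>?S. ctmc_trans ?S ?G T (Q1,Q2) b * f b)"
    unfolding ctmc_trans_def
    by (intro sums_sum sums_mult2 summable_sums summ)
  moreover have "(\<lambda>k. \<Sum>b\<in>?S. T^k / fact k * mat_pow ?S ?G k (Q1,Q2) b * f b)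
      = (\<lambda>k. T^k / fact k * (?Op ^^ k) f (Q1,Q2))"
  proof
    fix k
    have "(\<Sum>b\<in>?S. T^k / fact k * mat_pow ?S ?G k (Q1,Q2) b * f b)
       = T^k / fact k * (\<Sum>b\<in>?S. mat_pow ?S ?G k (Q1,Q2) b * f b)"
      by (simp add: sum_distrib_left mult.assoc)
    thus "(\<Sum>b\<in>?S. T^k / fact k * mat_pow ?S ?G k (Q1,Q2) b * f b) = T^k / fact k * (?Op ^^ k) f (Q1,Q2)"
      using matpow_gop[OF a] by simp
  qed
  ultimately show ?thesis by (simp add: inv_expect_def Let_def)
qed

definition sD :: "(nat \<times> nat \<Rightarrow> real) \<Rightarrow> nat \<Rightarrow> nat \<Rightarrow> real" where
  "sD g p q = g(Suc p,Suc q) - g(Suc p,q) - g(p,Suc q) + g(p,q)"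
definition cR :: "(nat \<times> nat \<Rightarrow> real) \<Rightarrow> nat \<Rightarrow> real" where
  "cR g j = g(0,Suc(Suc j)) - 2*g(0,Suc j) + g(0,j)"
definition cC :: "(nat \<times> nat \<Rightarrow> real) \<Rightarrow> nat \<Rightarrow> real" where
  "cC g i = g(Suc(Suc i),0) - 2*g(Suc i,0) + g(i,0)"
definition cone :: "(nat \<times> nat \<Rightarrow> real) \<Rightarrow> bool" where
  "cone g \<longleftrightarrow> (\<forall>i j. 0 \<le> sD g i j) \<and> (\<forall>j. g(0,j) \<le> g(0,Suc j)) \<and> (\<forall>j. 0 \<le> cR g j)
     \<and> (\<forall>i. g(i,0) \<le> g(Suc i,0)) \<and> (\<forall>i. 0 \<le> cC g i)"

lemma cone_W:
  assumes a: "a \<ge> 0" and b: "b \<ge> 0" and s1: "s1 \<ge> a" and s2: "s2 \<ge> b"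
    and L: "L \<ge> a + b" "L \<ge> s1" "L \<ge> s2" and g: "cone g"
  shows "cone (\<lambda>x. L * g x + Gop a b s1 s2 g x)"
proof -
  let ?W = "\<lambda>x. L * g x + Gop a b s1 s2 g x"
  have D: "\<And>i j. 0 \<le> sD g i j" and R1: "\<And>j. g(0,j) \<le> g(0,Suc j)" and R2: "\<And>j. 0 \<le> cR g j"
    and C1: "\<And>i. g(i,0) \<le> g(Suc i,0)" and C2: "\<And>i. 0 \<le> cC g i"
    using g unfolding cone_def by auto
  have p1: "0 \<le> L - a - b" "0 \<le> s1 - a" "0 \<le> s2 - b" "0 \<le> L - s1" "0 \<le> L - s2" "0 \<le> s1" "0 \<le> s2"
    using a b s1 s2 L by auto
  have part1: "0 \<le> sD ?W i j" for i j
  proof (cases i)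
    case 0
    show ?thesis
    proof (cases j)
      case 0
      have "sD ?W i j = (L-a-b)*sD g 0 0 + (s2-b)*(g(0,1)-g(0,0)) + (s1-a)*(g(1,0)-g(0,0))"
        using \<open>i=0\<close> 0 by (simp add: sD_def Gop_def algebra_simps)
      also have "\<dots> \<ge> 0" using p1 D R1[of 0] C1[of 0]
        by (intro add_nonneg_nonneg mult_nonneg_nonneg) auto
      finally show ?thesis .
    next
      case (Suc j')
      have "sD ?W i j = (L-a-b)*sD g 0 (Suc j') + b*sD g 0 j' + (s2-b)*cR g j'"
        using \<open>i=0\<close> Suc by (simp add: sD_def cR_def Gop_def algebra_simps)
      also have "\<dots> \<ge> 0" using p1 D R2 b
        by (intro add_nonneg_nonneg mult_nonneg_nonneg) auto
      finally show ?thesis .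
    qed
  next
    case (Suc i')
    show ?thesis
    proof (cases j)
      case 0
      have "sD ?W i j = (L-a-b)*sD g (Suc i') 0 + a*sD g i' 0 + (s1-a)*cC g i'"
        using Suc 0 by (simp add: sD_def cC_def Gop_def algebra_simps)
      also have "\<dots> \<ge> 0" using p1 D C2 a
        by (intro add_nonneg_nonneg mult_nonneg_nonneg) auto
      finally show ?thesis .
    next
      case (Suc j')
      have "sD ?W i j = (L-a-b)*sD g (Suc i') (Suc j') + a*sD g i' (Suc j') + b*sD g (Suc i') j'"
        using \<open>i = Suc i'\<close> Suc by (simp add: sD_def Gop_def algebra_simps)
      also have "\<dots> \<ge> 0" using p1 D a b
        by (intro add_nonneg_nonneg mult_nonneg_nonneg) auto
      finally show ?thesis .
    qed
  qed
  have part2: "?W(0,j) \<le> ?W(0,Suc j)" for j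
  proof (cases j)
    case 0
    have "?W(0,Suc j) - ?W(0,j) = (L-s2)*(g(0,1)-g(0,0))" using 0 by (simp add: Gop_def algebra_simps)
    also have "\<dots> \<ge> 0" using p1 R1[of 0] by (intro mult_nonneg_nonneg) auto
    finally show ?thesis by simp
  next
    case (Suc j')
    have "?W(0,Suc j) - ?W(0,j) = (L-s2)*(g(0,Suc (Suc j'))-g(0,Suc j')) + s2*(g(0,Suc j')-g(0,j'))"
      using Suc by (simp add: Gop_def algebra_simps)
    also have "\<dots> \<ge> 0" using p1 R1[of j'] R1[of "Suc j'"] by (intro add_nonneg_nonneg mult_nonneg_nonneg) auto
    finally show ?thesis by simp
  qed
  have part3: "0 \<le> cR ?W j" for j
  proof (cases j)
    case 0
    have "cR ?W j = (L-s2)*cR g 0 + s2*(g(0,1)-g(0,0))" using 0 by (simp add: cR_def Gop_def algebra_simps)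
    also have "\<dots> \<ge> 0" using p1 R1[of 0] R2[of 0] by (intro add_nonneg_nonneg mult_nonneg_nonneg) auto
    finally show ?thesis .
  next
    case (Suc j')
    have "cR ?W j = (L-s2)*cR g (Suc j') + s2*cR g j'" using Suc by (simp add: cR_def Gop_def algebra_simps)
    also have "\<dots> \<ge> 0" using p1 R2 by (intro add_nonneg_nonneg mult_nonneg_nonneg) auto
    finally show ?thesis .
  qed
  have part4: "?W(i,0) \<le> ?W(Suc i,0)" for i
  proof (cases i)
    case 0
    have "?W(Suc i,0) - ?W(i,0) = (L-s1)*(g(1,0)-g(0,0))" using 0 by (simp add: Gop_def algebra_simps)
    also have "\<dots> \<ge> 0" using p1 C1[of 0] by (intro mult_nonneg_nonneg) auto
    finally show ?thesis by simp
  next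
    case (Suc i')
    have "?W(Suc i,0) - ?W(i,0) = (L-s1)*(g(Suc (Suc i'),0)-g(Suc i',0)) + s1*(g(Suc i',0)-g(i',0))"
      using Suc by (simp add: Gop_def algebra_simps)
    also have "\<dots> \<ge> 0" using p1 C1[of i'] C1[of "Suc i'"] by (intro add_nonneg_nonneg mult_nonneg_nonneg) auto
    finally show ?thesis by simp
  qed
  have part5: "0 \<le> cC ?W i" for i
  proof (cases i)
    case 0
    have "cC ?W i = (L-s1)*cC g 0 + s1*(g(1,0)-g(0,0))" using 0 by (simp add: cC_def Gop_def algebra_simps)
    also have "\<dots> \<ge> 0" using p1 C1[of 0] C2[of 0] by (intro add_nonneg_nonneg mult_nonneg_nonneg) auto
    finally show ?thesis .
  next
    case (Suc i')
    have "cC ?W i = (L-s1)*cC g (Suc i') + s1*cC g i'" using Suc by (simp add: cC_def Gop_def algebra_simps)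
    also have "\<dots> \<ge> 0" using p1 C2 by (intro add_nonneg_nonneg mult_nonneg_nonneg) auto
    finally show ?thesis .
  qed
  show ?thesis unfolding cone_def using part1 part2 part3 part4 part5 by blast
qed

definition Pop :: "real \<Rightarrow> real \<Rightarrow> real \<Rightarrow> real \<Rightarrow> real \<Rightarrow> (nat \<times> nat \<Rightarrow> real) \<Rightarrow> nat \<times> nat \<Rightarrow> real" where
  "Pop L a b s1 s2 g = (\<lambda>x. g x + Gop a b s1 s2 g x / L)"

lemma cone_scale: "cone g \<Longrightarrow> (c::real) \<ge> 0 \<Longrightarrow> cone (\<lambda>x. c * g x)"
  unfolding cone_def sD_def cR_def cC_def
proof (intro conjI allI, goal_cases)
  case (1 i j)
  have "0 \<le> c * (g (Suc i, Suc j) - g (Suc i, j) - g (i, Suc j) + g (i, j))" using 1 by auto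
  thus ?case by (simp add: algebra_simps)
next
  case (2 j) thus ?case by (auto intro: mult_left_mono)
next
  case (3 j)
  have "0 \<le> c * (g (0, Suc (Suc j)) - 2 * g (0, Suc j) + g (0, j))" using 3 by auto
  thus ?case by (simp add: algebra_simps)
next
  case (4 i) thus ?case by (auto intro: mult_left_mono)
next
  case (5 i)
  have "0 \<le> c * (g (Suc (Suc i), 0) - 2 * g (Suc i, 0) + g (i, 0))" using 5 by auto
  thus ?case by (simp add: algebra_simps)
qed

lemma cone_Pop_pow:
  assumes a: "a \<ge> 0" and b: "b \<ge> 0" and s1: "s1 \<ge> a" and s2: "s2 \<ge> b"
    and L: "L \<ge> a + b" "L \<ge> s1" "L \<ge> s2" "L > 0" and g: "cone g"
  shows "cone ((Pop L a b s1 s2 ^^ n) g)"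
proof (induction n)
  case 0 then show ?case using g by simp
next
  case (Suc n)
  let ?h = "(Pop L a b s1 s2 ^^ n) g"
  have "cone (\<lambda>x. (1/L) * (L * ?h x + Gop a b s1 s2 ?h x))"
    by (rule cone_scale[OF cone_W[OF a b s1 s2 L(1-3) Suc]]) (use L in auto)
  moreover have "(\<lambda>x. (1/L) * (L * ?h x + Gop a b s1 s2 ?h x)) = Pop L a b s1 s2 ?h"
    using L by (auto simp: Pop_def field_simps)
  ultimately show ?case by simp
qed

lemma cone_f1: "cone (\<lambda>x. real (fst x))"
  by (simp add: cone_def sD_def cR_def cC_def)
lemma cone_f2: "cone (\<lambda>x. real (snd x))"
  by (simp add: cone_def sD_def cR_def cC_def)

lemma gop_lin: "Gop a b s1 s2 (\<lambda>x. \<Sum>m\<in>A. w m * h m x) c = (\<Sum>m\<in>A. w m * Gop a b s1 s2 (h m) c)"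
  by (cases c) (simp add: Gop_def sum_distrib_left sum_subtractf sum.distrib algebra_simps)

lemma pascal_sum:
  fixes g :: "nat \<Rightarrow> real"
  shows "(\<Sum>m\<le>n. real (n choose m) * y^m * g m) + y * (\<Sum>m\<le>n. real (n choose m) * y^m * g (Suc m))
    = (\<Sum>m\<le>Suc n. real (Suc n choose m) * y^m * g m)"
proof -
  have e1: "(\<Sum>m\<le>n. real (n choose m) * y^m * g m) = (\<Sum>m\<le>Suc n. real (n choose m) * y^m * g m)"
    by simp
  also have "\<dots> = g 0 + (\<Sum>m\<le>n. real (n choose Suc m) * y^Suc m * g (Suc m))"
    by (subst sum.atMost_Suc_shift) simp
  finally have A: "(\<Sum>m\<le>n. real (n choose m) * y^m * g m) = g 0 + (\<Sum>m\<le>n. real (n choose Suc m) * y^Suc m * g (Suc m))" .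
  have B: "(\<Sum>m\<le>Suc n. real (Suc n choose m) * y^m * g m)
     = g 0 + (\<Sum>m\<le>n. real (n choose m) * y^Suc m * g (Suc m)) + (\<Sum>m\<le>n. real (n choose Suc m) * y^Suc m * g (Suc m))"
    by (subst sum.atMost_Suc_shift) (simp add: sum.distrib algebra_simps)
  show ?thesis unfolding A B by (simp add: sum_distrib_left algebra_simps)
qed

lemma pop_binom:
  assumes "L \<noteq> 0"
  shows "(Pop L a b s1 s2 ^^ n) f = (\<lambda>x. \<Sum>m\<le>n. real (n choose m) * (1/L)^m * (Gop a b s1 s2 ^^ m) f x)"
proof (induction n)
  case 0 then show ?case by simp
next
  case (Suc n)
  let ?G = "Gop a b s1 s2"
  show ?case
  proof
    fix x
    have "(Pop L a b s1 s2 ^^ Suc n) f x = (Pop L a b s1 s2 ((Pop L a b s1 s2 ^^ n) f)) x" by simp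
    also have "\<dots> = (\<Sum>m\<le>n. real (n choose m) * (1/L)^m * (?G ^^ m) f x)
        + (1/L) * (\<Sum>m\<le>n. real (n choose m) * (1/L)^m * (?G ^^ Suc m) f x)"
      unfolding Suc Pop_def gop_lin by (simp add: divide_inverse mult.commute)
    also have "\<dots> = (\<Sum>m\<le>Suc n. real (Suc n choose m) * (1/L)^m * (?G ^^ m) f x)"
      by (rule pascal_sum[of n "1/L" "\<lambda>m. (?G ^^ m) f x"])
    finally show "(Pop L a b s1 s2 ^^ Suc n) f x = (\<Sum>m\<le>Suc n. real (Suc n choose m) * (1/L)^m * (?G ^^ m) f x)" .
  qed
qed

lemma unif_sums:
  assumes nn: "l1 \<ge> 0" "l2 \<ge> 0" "p12 \<ge> 0" "p21 \<ge> 0" and L: "L > 0"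
  shows "(\<lambda>n. (L*T)^n / fact n * (Pop L l1 l2 (l1+l2*p21) (l2+l1*p12) ^^ n) f (Q1,Q2))
     sums (inv_expect l1 l2 p12 p21 Q1 Q2 T f * exp (L*T))"
proof -
  let ?S = "inv_states Q1 Q2"
  let ?Op = "Gop l1 l2 (l1+l2*p21) (l2+l1*p12)"
  let ?K = "2*(l1+l2+(l1+l2*p21)+(l2+l1*p12))"
  let ?M = "\<Sum>c\<in>?S. \<bar>f c\<bar>"
  define u where "u k = T^k / fact k * (?Op ^^ k) f (Q1,Q2)" for k
  define e where "e k = (L*T)^k / fact k" for k
  have a: "(Q1,Q2) \<in> ?S" by (simp add: inv_states_def)
  have fin: "finite ?S" by (simp add: inv_states_def)
  have nn2: "l1+l2*p21 \<ge> 0" "l2+l1*p12 \<ge> 0" using nn by auto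
  have bdf: "\<forall>c\<in>?S. \<bar>f c\<bar> \<le> ?M" using fin by (auto intro: member_le_sum)
  have su: "summable (\<lambda>k. norm (u k))"
  proof (rule summable_comparison_test)
    show "summable (\<lambda>k. inverse (fact k) * (\<bar>T\<bar> * ?K)^k * ?M)" by (intro summable_mult2 summable_exp)
    show "\<exists>N. \<forall>k\<ge>N. norm (norm (u k)) \<le> inverse (fact k) * (\<bar>T\<bar> * ?K)^k * ?M"
    proof (intro exI allI impI)
      fix k :: nat
      have B: "\<bar>(?Op ^^ k) f (Q1,Q2)\<bar> \<le> ?K^k * ?M"
        using gop_pow_bound[OF nn(1,2) nn2 bdf, of k] a by simp
      have "norm (norm (u k)) = inverse (fact k) * (\<bar>T\<bar>^k * \<bar>(?Op ^^ k) f (Q1,Q2)\<bar>)"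
        by (simp add: u_def abs_mult power_abs divide_inverse)
      also have "\<dots> \<le> inverse (fact k) * (\<bar>T\<bar>^k * (?K^k * ?M))"
        by (intro mult_left_mono B) auto
      also have "\<dots> = inverse (fact k) * (\<bar>T\<bar> * ?K)^k * ?M" by (simp add: power_mult_distrib)
      finally show "norm (norm (u k)) \<le> inverse (fact k) * (\<bar>T\<bar> * ?K)^k * ?M" .
    qed
  qed
  have se: "summable (\<lambda>k. norm (e k))"
    using summable_exp[of "\<bar>L*T\<bar>"] by (simp add: e_def abs_mult power_abs divide_inverse mult.commute)
  have u_sums: "u sums inv_expect l1 l2 p12 p21 Q1 Q2 T f"
    unfolding u_def by (rule expect_sums[OF nn])
  have e_sums: "e sums exp (L*T)"
  proof -
    have "e = (\<lambda>n. inverse (fact n) * (L * T) ^ n)" by (simp add: e_def fun_eq_iff divide_inverse mult.commute)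
    thus ?thesis using exp_converges[of "L*T"] by (simp add: divide_inverse mult.commute)
  qed
  have cp: "(\<lambda>k. \<Sum>i\<le>k. u i * e (k - i)) sums ((\<Sum>k. u k) * (\<Sum>k. e k))"
    by (rule Cauchy_product_sums[OF su se])
  have trm: "(\<Sum>i\<le>n. u i * e (n - i)) = (L*T)^n / fact n * (Pop L l1 l2 (l1+l2*p21) (l2+l1*p12) ^^ n) f (Q1,Q2)" for n
  proof -
    have "(L*T)^n / fact n * (Pop L l1 l2 (l1+l2*p21) (l2+l1*p12) ^^ n) f (Q1,Q2)
       = (\<Sum>i\<le>n. (L*T)^n / fact n * (real (n choose i) * (1/L)^i * (?Op ^^ i) f (Q1,Q2)))"
      using L by (simp add: pop_binom sum_distrib_left)
    also have "\<dots> = (\<Sum>i\<le>n. u i * e (n - i))"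
    proof (rule sum.cong)
      fix i assume "i \<in> {..n}"
      hence i: "i \<le> n" by simp
      have pL: "L^n = L^i * L^(n-i)" and pT: "T^n = T^i * T^(n-i)" using i by (simp_all flip: power_add)
      show "(L*T)^n / fact n * (real (n choose i) * (1/L)^i * (?Op ^^ i) f (Q1,Q2)) = u i * e (n - i)"
        unfolding u_def e_def binomial_fact[OF i] power_mult_distrib pL pT using L
        by (simp add: field_simps)
    qed simp
    finally show ?thesis by simp
  qed
  show ?thesis using cp unfolding trm sums_unique[OF u_sums, symmetric] sums_unique[OF e_sums, symmetric] .
qed

lemma supermod:
  assumes l1: "l1 > 0" and l2: "l2 > 0" and p: "p12 \<ge> 0" "p21 \<ge> 0" and T: "T > 0" and f: "cone f"
  shows "0 \<le> inv_expect l1 l2 p12 p21 (Q1+1) (Q2+1) T f - inv_expect l1 l2 p12 p21 (Q1+1) Q2 T f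
     - inv_expect l1 l2 p12 p21 Q1 (Q2+1) T f + inv_expect l1 l2 p12 p21 Q1 Q2 T f"
proof -
  define L where "L = l1+l2+l1*p12+l2*p21"
  have Lp: "L > 0" using l1 l2 p by (simp add: L_def add_pos_nonneg)
  let ?h = "\<lambda>n. (Pop L l1 l2 (l1+l2*p21) (l2+l1*p12) ^^ n) f"
  let ?c = "\<lambda>n. (L*T)^n / fact n"
  let ?E = "\<lambda>q1 q2. inv_expect l1 l2 p12 p21 q1 q2 T f"
  have nn: "l1 \<ge> 0" "l2 \<ge> 0" "p12 \<ge> 0" "p21 \<ge> 0" using l1 l2 p by auto
  have S: "\<And>q1 q2. (\<lambda>n. ?c n * ?h n (q1,q2)) sums (?E q1 q2 * exp (L*T))"
    by (rule unif_sums[OF nn Lp])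
  have sm: "(\<lambda>n. ?c n * ?h n (Suc Q1,Suc Q2) - ?c n * ?h n (Suc Q1,Q2) - ?c n * ?h n (Q1,Suc Q2) + ?c n * ?h n (Q1,Q2))
     sums (?E (Suc Q1) (Suc Q2) * exp (L*T) - ?E (Suc Q1) Q2 * exp (L*T) - ?E Q1 (Suc Q2) * exp (L*T) + ?E Q1 Q2 * exp (L*T))"
    by (intro sums_add sums_diff S)
  have cone_h: "cone (?h n)" for n
    by (rule cone_Pop_pow) (use nn f Lp in \<open>auto simp: L_def mult_nonneg_nonneg\<close>)
  have tn: "0 \<le> ?c n * ?h n (Suc Q1,Suc Q2) - ?c n * ?h n (Suc Q1,Q2) - ?c n * ?h n (Q1,Suc Q2) + ?c n * ?h n (Q1,Q2)" for n
  proof -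
    have "0 \<le> ?c n * sD (?h n) Q1 Q2"
      using cone_h[of n] Lp T unfolding cone_def by (intro mult_nonneg_nonneg) auto
    thus ?thesis by (simp add: sD_def algebra_simps)
  qed
  have "0 \<le> ?E (Suc Q1) (Suc Q2) * exp (L*T) - ?E (Suc Q1) Q2 * exp (L*T) - ?E Q1 (Suc Q2) * exp (L*T) + ?E Q1 Q2 * exp (L*T)"
    by (rule sums_le[OF _ sums_zero sm]) (use tn in auto)
  hence "0 \<le> (?E (Suc Q1) (Suc Q2) - ?E (Suc Q1) Q2 - ?E Q1 (Suc Q2) + ?E Q1 Q2) * exp (L*T)"
    by (simp add: algebra_simps)
  hence "0 \<le> ?E (Suc Q1) (Suc Q2) - ?E (Suc Q1) Q2 - ?E Q1 (Suc Q2) + ?E Q1 Q2"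
    by (simp add: zero_le_mult_iff)
  thus ?thesis by simp
qed

theorem theorem2:
  fixes T l1 l2 p12 p21 r1 r2 c1 c2 h1 h2 :: real and Q1 Q2 :: nat
  assumes "T > 0" and "l1 > 0" and "l2 > 0"
    and "0 \<le> p12" and "p12 \<le> 1" and "0 \<le> p21" and "p21 \<le> 1"
    and "r1 \<ge> 0" and "r2 \<ge> 0" and "h1 \<ge> 0" and "h2 \<ge> 0"
  shows "pi1 T l1 l2 p12 p21 r1 r2 c1 c2 h1 h2 (Q1 + 1) (Q2 + 1)
       - pi1 T l1 l2 p12 p21 r1 r2 c1 c2 h1 h2 (Q1 + 1) Q2
       - pi1 T l1 l2 p12 p21 r1 r2 c1 c2 h1 h2 Q1 (Q2 + 1)
       + pi1 T l1 l2 p12 p21 r1 r2 c1 c2 h1 h2 Q1 Q2 \<le> 0"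
proof -
  let ?E1 = "\<lambda>q1 q2. inv_expect l1 l2 p12 p21 q1 q2 T (\<lambda>b. real (fst b))"
  let ?E2 = "\<lambda>q1 q2. inv_expect l1 l2 p12 p21 q1 q2 T (\<lambda>b. real (snd b))"
  define D1 where "D1 = ?E1 (Q1+1) (Q2+1) - ?E1 (Q1+1) Q2 - ?E1 Q1 (Q2+1) + ?E1 Q1 Q2"
  define D2 where "D2 = ?E2 (Q1+1) (Q2+1) - ?E2 (Q1+1) Q2 - ?E2 Q1 (Q2+1) + ?E2 Q1 Q2"
  have d1: "0 \<le> D1" unfolding D1_def using supermod[OF assms(2,3,4,6,1) cone_f1] .
  have d2: "0 \<le> D2" unfolding D2_def using supermod[OF assms(2,3,4,6,1) cone_f2] .
  have eq: "pi1 T l1 l2 p12 p21 r1 r2 c1 c2 h1 h2 (Q1 + 1) (Q2 + 1)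
       - pi1 T l1 l2 p12 p21 r1 r2 c1 c2 h1 h2 (Q1 + 1) Q2
       - pi1 T l1 l2 p12 p21 r1 r2 c1 c2 h1 h2 Q1 (Q2 + 1)
       + pi1 T l1 l2 p12 p21 r1 r2 c1 c2 h1 h2 Q1 Q2 = - ((r1+h1) * D1 + (r2+h2) * D2) / T"
  proof -
    have "\<And>A B C D::real. (1/T)*A - (1/T)*B - (1/T)*C + (1/T)*D = (A - B - C + D)/T"
      by (simp add: diff_divide_distrib add_divide_distrib)
    thus ?thesis unfolding pi1_def D1_def D2_def by (simp only:) (simp add: algebra_simps)
  qed
  have "0 \<le> (r1+h1) * D1 + (r2+h2) * D2" using d1 d2 assms by (intro add_nonneg_nonneg mult_nonneg_nonneg) auto
  thus ?thesis unfolding eq using assms(1) by (simp add: divide_nonpos_pos)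
qed

end
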